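(* Let $K$ be a field equipped with $m$ commuting derivations $\Delta=\{\partial_1,\ldots,\partial_m\}$, all of which are identically zero on $K$, and let $K\{y\}$ be the ring of differential polynomials in one differential indeterminate $y$. For a polynomial $g=\sum_{j}c_jX^{\alpha_j}\in K[X_1,\ldots,X_m]$ (with $c_j\in K$, $\alpha_j\in\mathbb{N}^m$), define $\tilde g=\sum_j c_j\partial^{\alpha_j}y\in K\{y\}$. Let $f,f_1,\ldots,f_r\in K[X_1,\ldots,X_m]$ with $f\in(f_1,\ldots,f_r)$, let $G=\{\tilde f_1,\ldots,\tilde f_r\}$, and let $$k=\min\Big\{\max_{1\leqslant i\leqslant r}\deg g_i \;:\; g_1,\ldots,g_r\in K[X_1,\ldots,X_m],\ f=g_1f_1+\cdots+g_rf_r\Big\}.$$ Then $\tilde f\in (G)^{(k)}$, and, if $k\geqslant 1$, $\tilde f\notin (G)^{(k-1)}$.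
   Context: For $\alpha=(\alpha_1,\ldots,\alpha_m)\in\mathbb{N}^m$, $X^\alpha=X_1^{\alpha_1}\cdots X_m^{\alpha_m}$ and $\partial^\alpha=\partial_1^{\alpha_1}\cdots\partial_m^{\alpha_m}$, whose order is $\alpha_1+\cdots+\alpha_m$. The ring $K\{y\}$ is the polynomial ring over $K$ in the variables $\partial^\alpha y$, $\alpha\in\mathbb{N}^m$, with derivations $\partial_i(\partial^\alpha y)=\partial_i\partial^\alpha y$. For a subset $G\subseteq K\{y\}$ and an integer $j\geqslant 0$, $(G)^{(j)}$ denotes the ideal generated by all $\theta g$ with $g\in G$ and $\theta=\partial^\alpha$ of order at most $j$. $\deg$ denotes total degree. *)

theory Defs
  imports "HOL-Library.Poly_Mapping"
begin

(* Multivariate polynomials over K in variables X_0,...,X_{m-1} (indices shifted by one):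
  maps from exponent vectors (nat \<Rightarrow>\<^sub>0 nat) to coefficients. *)
type_synonym 'a mpoly = "(nat \<Rightarrow>\<^sub>0 nat) \<Rightarrow>\<^sub>0 'a"

(* Differential polynomials K{y}: polynomials in the variables \<partial>^\<alpha> y, indexed by \<alpha>.
  A monomial is a finitely supported map from \<alpha> to exponents. *)
type_synonym 'a dpoly = "((nat \<Rightarrow>\<^sub>0 nat) \<Rightarrow>\<^sub>0 nat) \<Rightarrow>\<^sub>0 'a"

definition ord_mon :: "(nat \<Rightarrow>\<^sub>0 nat) \<Rightarrow> nat" where
  "ord_mon \<alpha> = (\<Sum>i\<in>Poly_Mapping.keys \<alpha>. Poly_Mapping.lookup \<alpha> i)"

definition in_vars :: "nat \<Rightarrow> (nat \<Rightarrow>\<^sub>0 nat) \<Rightarrow> bool" where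
  "in_vars m \<alpha> \<longleftrightarrow> Poly_Mapping.keys \<alpha> \<subseteq> {..<m}"

definition is_poly :: "nat \<Rightarrow> 'a::zero mpoly \<Rightarrow> bool" where
  "is_poly m g \<longleftrightarrow> (\<forall>\<alpha>\<in>Poly_Mapping.keys g. in_vars m \<alpha>)"

(* total degree (degree of the zero polynomial taken to be 0) *)
definition tdeg :: "'a::zero mpoly \<Rightarrow> nat" where
  "tdeg g = Max (insert 0 (ord_mon ` Poly_Mapping.keys g))"

definition dvar :: "(nat \<Rightarrow>\<^sub>0 nat) \<Rightarrow> 'a::comm_ring_1 dpoly" where
  "dvar \<alpha> = Poly_Mapping.single (Poly_Mapping.single \<alpha> 1) 1"

definition tilde :: "'a::comm_ring_1 mpoly \<Rightarrow> 'a dpoly" where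
  "tilde g = (\<Sum>\<alpha>\<in>Poly_Mapping.keys g. Poly_Mapping.single (Poly_Mapping.single \<alpha> 1) (Poly_Mapping.lookup g \<alpha>))"

(* The derivation \<partial>_i on K{y}, zero on K, with \<partial>_i(\<partial>^\<alpha> y) = \<partial>^(\<alpha>+e_i) y,
  extended by the Leibniz rule: on a monomial M = \<Prod> v_\<alpha>^{M \<alpha>},
  \<partial>_i M = \<Sum>_\<alpha> M(\<alpha>) * M / v_\<alpha> * v_{\<alpha>+e_i}. *)
definition dderiv :: "nat \<Rightarrow> 'a::comm_ring_1 dpoly \<Rightarrow> 'a dpoly" where
  "dderiv i P = (\<Sum>M\<in>Poly_Mapping.keys P. \<Sum>\<alpha>\<in>Poly_Mapping.keys M.
      Poly_Mapping.single
        (M - Poly_Mapping.single \<alpha> 1 + Poly_Mapping.single (\<alpha> + Poly_Mapping.single i 1) 1)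
        (of_nat (Poly_Mapping.lookup M \<alpha>) * Poly_Mapping.lookup P M))"

definition dTheta :: "nat \<Rightarrow> (nat \<Rightarrow>\<^sub>0 nat) \<Rightarrow> 'a::comm_ring_1 dpoly \<Rightarrow> 'a dpoly" where
  "dTheta m \<alpha> = foldr (\<lambda>i h. (dderiv i ^^ Poly_Mapping.lookup \<alpha> i) \<circ> h) [0..<m] id"

definition ideal_gen :: "'b::comm_ring_1 set \<Rightarrow> 'b set" where
  "ideal_gen S = {x. \<exists>F c. finite F \<and> F \<subseteq> S \<and> x = (\<Sum>s\<in>F. c s * s)}"

definition ideal_ord :: "nat \<Rightarrow> 'a::comm_ring_1 dpoly set \<Rightarrow> nat \<Rightarrow> 'a dpoly set" where
  "ideal_ord m G j = ideal_gen {dTheta m \<alpha> g | \<alpha> g. g \<in> G \<and> in_vars m \<alpha> \<and> ord_mon \<alpha> \<le> j}"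

end

theory Submission
  imports Defs
begin

lemma pm_decomp: "p = (\<Sum>k\<in>Poly_Mapping.keys p. Poly_Mapping.single k (Poly_Mapping.lookup p k))"
proof (rule poly_mapping_eqI)
  fix x
  show "Poly_Mapping.lookup p x = Poly_Mapping.lookup (\<Sum>k\<in>Poly_Mapping.keys p. Poly_Mapping.single k (Poly_Mapping.lookup p k)) x"
    by (cases "x \<in> Poly_Mapping.keys p")
      (auto simp: lookup_sum lookup_single when_def in_keys_iff)
qed

lemma pm_induct:
  fixes p :: "'a \<Rightarrow>\<^sub>0 'b::comm_monoid_add"
  assumes "P 0" "\<And>k v. P (Poly_Mapping.single k v)" "\<And>f g. P f \<Longrightarrow> P g \<Longrightarrow> P (f+g)"
  shows "P p"
proof -
  have "P (\<Sum>k\<in>A. Poly_Mapping.single k (Poly_Mapping.lookup p k))" if "finite A" for A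
    using that by (induction A rule: finite_induct) (auto intro: assms)
  then show ?thesis by (subst pm_decomp) simp
qed

lemma tilde_alt:
  assumes "finite S" "Poly_Mapping.keys g \<subseteq> S"
  shows "tilde g = (\<Sum>\<alpha>\<in>S. Poly_Mapping.single (Poly_Mapping.single \<alpha> 1) (Poly_Mapping.lookup g \<alpha>))"
  unfolding tilde_def
  by (rule sum.mono_neutral_left) (use assms in \<open>auto simp: in_keys_iff\<close>)

lemma tilde_add: "tilde (g + h) = tilde g + tilde h"
proof -
  let ?S = "Poly_Mapping.keys g \<union> Poly_Mapping.keys h"
  have "tilde (g + h) = (\<Sum>\<alpha>\<in>?S. Poly_Mapping.single (Poly_Mapping.single \<alpha> 1) (Poly_Mapping.lookup (g+h) \<alpha>))"
    by (rule tilde_alt) (auto dest: keys_add[THEN subsetD])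
  also have "\<dots> = tilde g + tilde h"
    by (simp add: tilde_alt[of ?S g] tilde_alt[of ?S h] lookup_add single_add sum.distrib)
  finally show ?thesis .
qed

lemma tilde_single: "tilde (Poly_Mapping.single \<beta> c) = Poly_Mapping.single (Poly_Mapping.single \<beta> 1) c"
  by (simp add: tilde_def)

lemma tilde_zero: "tilde 0 = 0"
  by (simp add: tilde_def)

lemma dderiv_alt:
  assumes "finite S" "Poly_Mapping.keys P \<subseteq> S"
  shows "dderiv i P = (\<Sum>M\<in>S. \<Sum>\<alpha>\<in>Poly_Mapping.keys M.
      Poly_Mapping.single
        (M - Poly_Mapping.single \<alpha> 1 + Poly_Mapping.single (\<alpha> + Poly_Mapping.single i 1) 1)
        (of_nat (Poly_Mapping.lookup M \<alpha>) * Poly_Mapping.lookup P M))"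
  unfolding dderiv_def
  by (rule sum.mono_neutral_left) (use assms in \<open>auto simp: in_keys_iff\<close>)

lemma dderiv_add: "dderiv i (P + Q) = dderiv i P + dderiv i Q"
proof -
  let ?S = "Poly_Mapping.keys P \<union> Poly_Mapping.keys Q"
  have "dderiv i (P + Q) = (\<Sum>M\<in>?S. \<Sum>\<alpha>\<in>Poly_Mapping.keys M.
      Poly_Mapping.single
        (M - Poly_Mapping.single \<alpha> 1 + Poly_Mapping.single (\<alpha> + Poly_Mapping.single i 1) 1)
        (of_nat (Poly_Mapping.lookup M \<alpha>) * Poly_Mapping.lookup (P+Q) M))"
    by (rule dderiv_alt) (auto dest: keys_add[THEN subsetD])
  also have "\<dots> = dderiv i P + dderiv i Q"
    by (simp add: dderiv_alt[of ?S P] dderiv_alt[of ?S Q] lookup_add single_add sum.distrib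
        distrib_left)
  finally show ?thesis .
qed

lemma dderiv_zero: "dderiv i 0 = 0"
  by (simp add: dderiv_def)

lemma dderiv_single:
  "dderiv i (Poly_Mapping.single (Poly_Mapping.single \<beta> 1) c) =
   Poly_Mapping.single (Poly_Mapping.single (\<beta> + Poly_Mapping.single i 1) 1) c"
  by (simp add: dderiv_def)

lemma dderiv_pow_add: "(dderiv i ^^ n) (P + Q) = (dderiv i ^^ n) P + (dderiv i ^^ n) Q"
  by (induction n) (simp_all add: dderiv_add)

lemma dderiv_pow_zero: "(dderiv i ^^ n) 0 = 0"
  by (induction n) (simp_all add: dderiv_zero)

lemma dderiv_pow_single:
  "(dderiv i ^^ n) (Poly_Mapping.single (Poly_Mapping.single \<beta> 1) c) =
   Poly_Mapping.single (Poly_Mapping.single (\<beta> + Poly_Mapping.single i n) 1) c"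
proof (induction n)
  case 0 then show ?case by simp
next
  case (Suc n)
  have "Poly_Mapping.single i (Suc n) = Poly_Mapping.single i n + Poly_Mapping.single i (1::nat)"
    by (simp add: single_add[symmetric])
  have "(dderiv i ^^ Suc n) (Poly_Mapping.single (Poly_Mapping.single \<beta> 1) c)
     = dderiv i ((dderiv i ^^ n) (Poly_Mapping.single (Poly_Mapping.single \<beta> 1) c))" by simp
  also have "\<dots> = dderiv i (Poly_Mapping.single (Poly_Mapping.single (\<beta> + Poly_Mapping.single i n) 1) c)"
    by (subst Suc) (rule refl)
  also have "\<dots> = Poly_Mapping.single (Poly_Mapping.single (\<beta> + Poly_Mapping.single i n + Poly_Mapping.single i 1) 1) c"
    by (rule dderiv_single)
  finally show ?case using \<open>Poly_Mapping.single i (Suc n) = _\<close> by (simp add: add.assoc)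
qed

lemma foldr_single:
  "foldr (\<lambda>i h. (dderiv i ^^ Poly_Mapping.lookup \<alpha> i) \<circ> h) xs id
     (Poly_Mapping.single (Poly_Mapping.single \<beta> 1) c) =
   Poly_Mapping.single (Poly_Mapping.single (\<beta> + sum_list (map (\<lambda>i. Poly_Mapping.single i (Poly_Mapping.lookup \<alpha> i)) xs)) 1) c"
proof (induction xs arbitrary: \<beta>)
  case Nil then show ?case by simp
next
  case (Cons x xs)
  let ?F = "\<lambda>i h. (dderiv i ^^ Poly_Mapping.lookup \<alpha> i) \<circ> h"
  let ?S = "sum_list (map (\<lambda>i. Poly_Mapping.single i (Poly_Mapping.lookup \<alpha> i)) xs)"
  have "foldr ?F (x#xs) id (Poly_Mapping.single (Poly_Mapping.single \<beta> 1) c)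
      = (dderiv x ^^ Poly_Mapping.lookup \<alpha> x) (foldr ?F xs id (Poly_Mapping.single (Poly_Mapping.single \<beta> 1) c))"
    by simp
  also have "\<dots> = (dderiv x ^^ Poly_Mapping.lookup \<alpha> x) (Poly_Mapping.single (Poly_Mapping.single (\<beta> + ?S) 1) c)"
    by (subst Cons) (rule refl)
  also have "\<dots> = Poly_Mapping.single (Poly_Mapping.single (\<beta> + ?S + Poly_Mapping.single x (Poly_Mapping.lookup \<alpha> x)) 1) c"
    by (rule dderiv_pow_single)
  also have "\<beta> + ?S + Poly_Mapping.single x (Poly_Mapping.lookup \<alpha> x) =
     \<beta> + sum_list (map (\<lambda>i. Poly_Mapping.single i (Poly_Mapping.lookup \<alpha> i)) (x#xs))"
    by (simp add: ac_simps)
  finally show ?case .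
qed

lemma foldr_add:
  "foldr (\<lambda>i h. (dderiv i ^^ Poly_Mapping.lookup \<alpha> i) \<circ> h) xs id (P + Q) =
   foldr (\<lambda>i h. (dderiv i ^^ Poly_Mapping.lookup \<alpha> i) \<circ> h) xs id P +
   foldr (\<lambda>i h. (dderiv i ^^ Poly_Mapping.lookup \<alpha> i) \<circ> h) xs id Q"
  by (induction xs) (simp_all add: dderiv_pow_add)

lemma foldr_zero:
  "foldr (\<lambda>i h. (dderiv i ^^ Poly_Mapping.lookup \<alpha> i) \<circ> h) xs id 0 = 0"
  by (induction xs) (simp_all add: dderiv_pow_zero)

lemma sum_list_restr:
  assumes "in_vars m \<alpha>"
  shows "sum_list (map (\<lambda>i. Poly_Mapping.single i (Poly_Mapping.lookup \<alpha> i)) [0..<m]) = \<alpha>"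
proof (rule poly_mapping_eqI)
  fix k
  have "sum_list (map (\<lambda>i. Poly_Mapping.single i (Poly_Mapping.lookup \<alpha> i)) [0..<m])
     = (\<Sum>i\<in>{0..<m}. Poly_Mapping.single i (Poly_Mapping.lookup \<alpha> i))"
    by (simp add: interv_sum_list_conv_sum_set_nat)
  moreover have "Poly_Mapping.lookup (\<Sum>i\<in>{0..<m}. Poly_Mapping.single i (Poly_Mapping.lookup \<alpha> i)) k
      = Poly_Mapping.lookup \<alpha> k"
    using assms unfolding in_vars_def
    by (cases "k < m") (auto simp: lookup_sum lookup_single when_def in_keys_iff)
  ultimately show "Poly_Mapping.lookup (sum_list (map (\<lambda>i. Poly_Mapping.single i (Poly_Mapping.lookup \<alpha> i)) [0..<m])) k
      = Poly_Mapping.lookup \<alpha> k" by simp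
qed

lemma dTheta_tilde:
  fixes h :: "'a::comm_ring_1 mpoly"
  assumes "in_vars m \<alpha>"
  shows "dTheta m \<alpha> (tilde h) = tilde (Poly_Mapping.single \<alpha> 1 * h)"
proof (induction h rule: pm_induct)
  case 1 then show ?case by (simp add: dTheta_def tilde_zero foldr_zero)
next
  case (2 k v)
  have "dTheta m \<alpha> (tilde (Poly_Mapping.single k v)) =
     foldr (\<lambda>i h. (dderiv i ^^ Poly_Mapping.lookup \<alpha> i) \<circ> h) [0..<m] id
       (Poly_Mapping.single (Poly_Mapping.single k 1) v)"
    by (simp add: dTheta_def tilde_single)
  also have "\<dots> = Poly_Mapping.single (Poly_Mapping.single (k + \<alpha>) 1) v"
    by (subst foldr_single) (simp add: sum_list_restr[OF assms])
  finally show ?case by (simp add: mult_single tilde_single add.commute)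
next
  case (3 f g)
  then show ?case
    by (simp add: dTheta_def distrib_left tilde_add foldr_add)
qed


definition lin :: "'a::comm_ring_1 dpoly \<Rightarrow> 'a mpoly" where
  "lin P = Abs_poly_mapping (\<lambda>\<alpha>. Poly_Mapping.lookup P (Poly_Mapping.single \<alpha> 1))"

lemma inj_single1: "inj (\<lambda>\<alpha>::nat\<Rightarrow>\<^sub>0nat. Poly_Mapping.single \<alpha> (1::nat))"
proof (rule injI)
  fix x y :: "nat\<Rightarrow>\<^sub>0nat"
  assume "Poly_Mapping.single x (1::nat) = Poly_Mapping.single y 1"
  then have "Poly_Mapping.lookup (Poly_Mapping.single x (1::nat)) x = Poly_Mapping.lookup (Poly_Mapping.single y 1) x"
    by simp
  then show "x = y" by (auto simp: lookup_single when_def split: if_splits)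
qed

lemma lookup_lin: "Poly_Mapping.lookup (lin P) \<alpha> = Poly_Mapping.lookup P (Poly_Mapping.single \<alpha> 1)"
proof -
  have "{\<alpha>. Poly_Mapping.lookup P (Poly_Mapping.single \<alpha> 1) \<noteq> 0} = (\<lambda>\<alpha>. Poly_Mapping.single \<alpha> 1) -` Poly_Mapping.keys P"
    by (auto simp: in_keys_iff)
  then have "finite {\<alpha>. Poly_Mapping.lookup P (Poly_Mapping.single \<alpha> 1) \<noteq> 0}"
    using finite_vimageI[OF finite_keys inj_single1] by simp
  then show ?thesis unfolding lin_def by (simp add: Abs_poly_mapping_inverse)
qed

lemma lin_add: "lin (P + Q) = lin P + lin Q"
  by (rule poly_mapping_eqI) (simp add: lookup_lin lookup_add)

lemma lin_zero: "lin 0 = 0"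
  by (rule poly_mapping_eqI) (simp add: lookup_lin)

lemma lin_tilde: "lin (tilde h) = h"
proof (rule poly_mapping_eqI)
  fix \<alpha>
  show "Poly_Mapping.lookup (lin (tilde h)) \<alpha> = Poly_Mapping.lookup h \<alpha>"
  proof (induction h rule: pm_induct)
    case 1 then show ?case by (simp add: lookup_lin tilde_zero)
  next
    case (2 k v)
    then show ?case
      using inj_single1[THEN injD, of k \<alpha>]
      by (auto simp: lookup_lin tilde_single lookup_single when_def)
  next
    case (3 f g) then show ?case by (simp add: lookup_lin tilde_add lookup_add)
  qed
qed

lemma single_plus_eq:
  fixes M :: "(nat\<Rightarrow>\<^sub>0nat) \<Rightarrow>\<^sub>0 nat"
  shows "(M + Poly_Mapping.single \<gamma> 1 = Poly_Mapping.single \<alpha> 1) = (M = 0 \<and> \<gamma> = \<alpha>)"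
proof
  assume h: "M + Poly_Mapping.single \<gamma> 1 = Poly_Mapping.single \<alpha> 1"
  then have "Poly_Mapping.lookup (M + Poly_Mapping.single \<gamma> 1) \<gamma> = Poly_Mapping.lookup (Poly_Mapping.single \<alpha> 1) \<gamma>"
    by simp
  then have g: "\<gamma> = \<alpha>"
    by (auto simp: lookup_add lookup_single when_def split: if_splits)
  with h have "M + Poly_Mapping.single \<gamma> 1 = 0 + Poly_Mapping.single \<gamma> 1" by simp
  then have "M = 0" by (rule add_right_imp_eq)
  with g show "M = 0 \<and> \<gamma> = \<alpha>" by simp
qed simp

lemma lin_mult: "lin (c * tilde h) = Poly_Mapping.single 0 (Poly_Mapping.lookup c 0) * h"
proof (induction c rule: pm_induct)
  case 1 then show ?case by (simp add: lin_zero)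
next
  case (2 M a)
  show ?case
  proof (induction h rule: pm_induct)
    case 1 then show ?case by (simp add: lin_zero tilde_zero)
  next
    case (2 \<gamma> b)
    show ?case
    proof (rule poly_mapping_eqI)
      fix \<alpha>
      show "Poly_Mapping.lookup (lin (Poly_Mapping.single M a * tilde (Poly_Mapping.single \<gamma> b))) \<alpha> =
        Poly_Mapping.lookup (Poly_Mapping.single 0 (Poly_Mapping.lookup (Poly_Mapping.single M a) 0) * Poly_Mapping.single \<gamma> b) \<alpha>"
        using inj_single1[THEN injD, of \<gamma> \<alpha>] single_plus_eq[of M \<gamma> \<alpha>]
        by (auto simp: lookup_lin tilde_single mult_single lookup_single when_def)
    qed
  next
    case (3 f g) then show ?case by (simp add: tilde_add lin_add distrib_left)
  qed
next
  case (3 f g) then show ?case by (simp add: lin_add distrib_right lookup_add single_add)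
qed

lemma ideal_zero: "0 \<in> ideal_gen S"
  unfolding ideal_gen_def by (rule CollectI, rule exI[of _ "{}"]) simp

lemma ideal_mult: "s \<in> S \<Longrightarrow> c * s \<in> ideal_gen S"
  unfolding ideal_gen_def
  by (rule CollectI, rule exI[of _ "{s}"], rule exI[of _ "\<lambda>_. c"]) simp

lemma ideal_add:
  assumes "x \<in> ideal_gen S" "y \<in> ideal_gen S"
  shows "x + y \<in> ideal_gen S"
proof -
  from assms obtain F1 c1 F2 c2 where h: "finite F1" "F1 \<subseteq> S" "x = (\<Sum>s\<in>F1. c1 s * s)"
    "finite F2" "F2 \<subseteq> S" "y = (\<Sum>s\<in>F2. c2 s * s)"
    unfolding ideal_gen_def by blast
  define c where "c s = (if s \<in> F1 then c1 s else 0) + (if s \<in> F2 then c2 s else 0)" for s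
  have "(\<Sum>s\<in>F1\<union>F2. c s * s) = (\<Sum>s\<in>F1\<union>F2. (if s \<in> F1 then c1 s * s else 0))
      + (\<Sum>s\<in>F1\<union>F2. (if s \<in> F2 then c2 s * s else 0))"
  proof -
    have "c s * s = (if s \<in> F1 then c1 s * s else 0) + (if s \<in> F2 then c2 s * s else 0)" for s
      by (simp add: c_def distrib_right)
    then show ?thesis by (simp add: sum.distrib)
  qed
  also have "\<dots> = x + y"
    using h by (simp add: sum.inter_restrict[symmetric] Int_absorb1 Int_absorb2 Un_Int_eq)
  finally show ?thesis unfolding ideal_gen_def using h
    by (intro CollectI exI[of _ "F1 \<union> F2"] exI[of _ c]) auto
qed

lemma ideal_sum:
  assumes "finite A" "\<forall>x\<in>A. f x \<in> ideal_gen S"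
  shows "sum f A \<in> ideal_gen S"
  using assms by (induction A rule: finite_induct) (auto intro: ideal_zero ideal_add)


lemma tilde_smult: "tilde (Poly_Mapping.single 0 a * h) = Poly_Mapping.single 0 a * tilde h"
proof (induction h rule: pm_induct)
  case 1 then show ?case by (simp add: tilde_zero)
next
  case (2 k v) then show ?case by (simp add: tilde_single mult_single)
next
  case (3 f g) then show ?case by (simp add: tilde_add distrib_left)
qed

lemma tilde_sum: "tilde (sum f A) = (\<Sum>x\<in>A. tilde (f x))"
  by (induction A rule: infinite_finite_induct) (simp_all add: tilde_zero tilde_add)

lemma lin_sum: "lin (sum f A) = (\<Sum>x\<in>A. lin (f x))"
  by (induction A rule: infinite_finite_induct) (simp_all add: lin_zero lin_add)

lemma ord_le_tdeg: "\<beta> \<in> Poly_Mapping.keys g \<Longrightarrow> ord_mon \<beta> \<le> tdeg g"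
  unfolding tdeg_def by (rule Max_ge) auto

theorem theorem4p3:
  fixes m r :: nat and f :: "'a::field mpoly" and fs :: "nat \<Rightarrow> 'a mpoly" and k :: nat
  assumes "is_poly m f"
    and "\<forall>i<r. is_poly m (fs i)"
    and "\<exists>gs. (\<forall>i<r. is_poly m (gs i)) \<and> f = (\<Sum>i<r. gs i * fs i)"
    and "k = (LEAST d. \<exists>gs. (\<forall>i<r. is_poly m (gs i)) \<and> f = (\<Sum>i<r. gs i * fs i)
                          \<and> (\<forall>i<r. tdeg (gs i) \<le> d))"
  shows "tilde f \<in> ideal_ord m (tilde ` fs ` {..<r}) k
    \<and> (k \<ge> 1 \<longrightarrow> tilde f \<notin> ideal_ord m (tilde ` fs ` {..<r}) (k - 1))"
proof -
  define P where "P d = (\<exists>gs. (\<forall>i<r. is_poly m (gs i)) \<and> f = (\<Sum>i<r. gs i * fs i)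
                          \<and> (\<forall>i<r. tdeg (gs i) \<le> d))" for d
  have kdef: "k = (LEAST d. P d)" using assms(4) unfolding P_def by simp
  from assms(3) obtain gs0 where g0: "\<forall>i<r. is_poly m (gs0 i)" "f = (\<Sum>i<r. gs0 i * fs i)" by blast
  have "P (\<Sum>i<r. tdeg (gs0 i))"
    unfolding P_def using g0 by (intro exI[of _ gs0]) (auto intro: member_le_sum)
  then have "P k" unfolding kdef by (rule LeastI)
  then obtain gs where gs: "\<forall>i<r. is_poly m (gs i)" "f = (\<Sum>i<r. gs i * fs i)"
    "\<forall>i<r. tdeg (gs i) \<le> k" unfolding P_def by blast
  have part1: "tilde f \<in> ideal_ord m (tilde ` fs ` {..<r}) k"
  proof -
    let ?S = "{dTheta m \<alpha> g | \<alpha> g. g \<in> tilde ` fs ` {..<r} \<and> in_vars m \<alpha> \<and> ord_mon \<alpha> \<le> k}"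
    have "tilde (gs i * fs i) \<in> ideal_gen ?S" if i: "i < r" for i
    proof -
      have "gs i * fs i = (\<Sum>\<beta>\<in>Poly_Mapping.keys (gs i). Poly_Mapping.single \<beta> (Poly_Mapping.lookup (gs i) \<beta>) * fs i)"
        by (subst pm_decomp[of "gs i"]) (simp add: sum_distrib_right)
      also have "\<dots> = (\<Sum>\<beta>\<in>Poly_Mapping.keys (gs i). Poly_Mapping.single 0 (Poly_Mapping.lookup (gs i) \<beta>) * (Poly_Mapping.single \<beta> 1 * fs i))"
        by (simp add: mult_single mult.assoc[symmetric])
      finally have eq: "tilde (gs i * fs i) = (\<Sum>\<beta>\<in>Poly_Mapping.keys (gs i). Poly_Mapping.single 0 (Poly_Mapping.lookup (gs i) \<beta>) * tilde (Poly_Mapping.single \<beta> 1 * fs i))"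
        by (simp add: tilde_sum tilde_smult)
      show ?thesis unfolding eq
      proof (rule ideal_sum, simp, rule ballI)
        fix \<beta> assume b: "\<beta> \<in> Poly_Mapping.keys (gs i)"
        have iv: "in_vars m \<beta>" using gs(1) i b unfolding is_poly_def by blast
        have "ord_mon \<beta> \<le> k" using ord_le_tdeg[OF b] gs(3) i by (meson le_trans)
        then have "dTheta m \<beta> (tilde (fs i)) \<in> ?S" using iv i by blast
        then show "Poly_Mapping.single 0 (Poly_Mapping.lookup (gs i) \<beta>) * tilde (Poly_Mapping.single \<beta> 1 * fs i) \<in> ideal_gen ?S"
          by (simp add: dTheta_tilde[OF iv] ideal_mult)
      qed
    qed
    then have "(\<Sum>i<r. tilde (gs i * fs i)) \<in> ideal_gen ?S" by (intro ideal_sum) auto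
    then show ?thesis unfolding ideal_ord_def using gs(2) by (simp add: tilde_sum)
  qed
  have part2: "tilde f \<notin> ideal_ord m (tilde ` fs ` {..<r}) (k - 1)" if k1: "k \<ge> 1"
  proof
    assume "tilde f \<in> ideal_ord m (tilde ` fs ` {..<r}) (k - 1)"
    then obtain F c where F: "finite F"
      "F \<subseteq> {dTheta m \<alpha> g | \<alpha> g. g \<in> tilde ` fs ` {..<r} \<and> in_vars m \<alpha> \<and> ord_mon \<alpha> \<le> k - 1}"
      "tilde f = (\<Sum>s\<in>F. c s * s)"
      unfolding ideal_ord_def ideal_gen_def by blast
    have "\<forall>s\<in>F. \<exists>p. snd p < r \<and> in_vars m (fst p) \<and> ord_mon (fst p) \<le> k - 1
       \<and> s = tilde (Poly_Mapping.single (fst p) 1 * fs (snd p))"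
    proof
      fix s assume "s \<in> F"
      with F(2) obtain \<alpha> i where "i < r" "in_vars m \<alpha>" "ord_mon \<alpha> \<le> k - 1" "s = dTheta m \<alpha> (tilde (fs i))"
        by blast
      then show "\<exists>p. snd p < r \<and> in_vars m (fst p) \<and> ord_mon (fst p) \<le> k - 1
       \<and> s = tilde (Poly_Mapping.single (fst p) 1 * fs (snd p))"
        by (intro exI[of _ "(\<alpha>, i)"]) (simp add: dTheta_tilde)
    qed
    then obtain q where q: "\<forall>s\<in>F. snd (q s) < r \<and> in_vars m (fst (q s)) \<and> ord_mon (fst (q s)) \<le> k - 1
       \<and> s = tilde (Poly_Mapping.single (fst (q s)) 1 * fs (snd (q s)))"
      by (rule bchoice[elim_format]) blast
    define h where "h s = Poly_Mapping.single (fst (q s)) (Poly_Mapping.lookup (c s) 0) * fs (snd (q s))" for s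
    have "f = lin (tilde f)" by (simp add: lin_tilde)
    also have "\<dots> = (\<Sum>s\<in>F. lin (c s * s))" using F(3) by (simp add: lin_sum)
    also have "\<dots> = (\<Sum>s\<in>F. h s)"
    proof (rule sum.cong[OF refl])
      fix s assume "s \<in> F"
      then have "lin (c s * s) = lin (c s * tilde (Poly_Mapping.single (fst (q s)) 1 * fs (snd (q s))))"
        using q by metis
      then show "lin (c s * s) = h s"
        by (simp add: lin_mult h_def mult.assoc[symmetric] mult_single)
    qed
    finally have fh: "f = (\<Sum>s\<in>F. h s)" .
    define gs' where "gs' j = (\<Sum>s\<in>{s. s \<in> F \<and> snd (q s) = j}. Poly_Mapping.single (fst (q s)) (Poly_Mapping.lookup (c s) 0))" for j
    have "(\<Sum>j<r. gs' j * fs j) = (\<Sum>j<r. \<Sum>s\<in>{s. s \<in> F \<and> snd (q s) = j}. h s)"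
      unfolding gs'_def h_def by (simp add: sum_distrib_right)
    also have "\<dots> = (\<Sum>s\<in>F. h s)"
      by (rule sum.group) (use F(1) q in auto)
    finally have f2: "f = (\<Sum>j<r. gs' j * fs j)" using fh by simp
    have keys_gs': "\<beta> \<in> Poly_Mapping.keys (gs' j) \<Longrightarrow> \<exists>s\<in>F. \<beta> = fst (q s)" for \<beta> j
      using keys_sum[of _ "{s. s \<in> F \<and> snd (q s) = j}"] unfolding gs'_def
      by (fastforce split: if_splits)
    have "P (k - 1)"
      unfolding P_def
    proof (intro exI[of _ gs'] conjI allI impI)
      fix j assume "j < r"
      show "is_poly m (gs' j)" unfolding is_poly_def using keys_gs' q by blast
      show "tdeg (gs' j) \<le> k - 1" unfolding tdeg_def
        using keys_gs' q by (auto simp: Max_le_iff)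
    qed (rule f2)
    then have "k \<le> k - 1" unfolding kdef by (rule Least_le)
    with k1 show False by simp
  qed
  show ?thesis using part1 part2 by blast
qed

end
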